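(* Let $\gamma\in\mathrm{SL}_2(\mathbb{Z})$ and $k\ge1$ with $\det(\mathrm{Id}_2-\gamma^k)\neq0$. Then \[ c_k(\gamma)=\frac1k\sum_{d\mid k}\phi\!\left(\frac kd\right)\bigl|\operatorname{tr}(\gamma^d)-2\bigr|, \] where $\phi$ is Euler's totient function.
   Context: Identify $\mathbb{Z}^{\oplus k}\otimes\mathbb{Z}^{\oplus2}\cong\mathbb{Z}^{2k}$ with coordinates $(j_1,\ell_1,\dots,j_k,\ell_k)$; for $w\in S_k$, $w\otimes\gamma$ acts by permuting the pairs according to $w$ and applying $\gamma$ to each pair. $c_k(\gamma)$ denotes the number of orbits of the cyclic group $\langle(1\,2\cdots k)\rangle\subset S_k$ (acting through its action on $\mathbb{Z}^{2k}$) on the finite set $\operatorname{coker}(\mathrm{Id}_{2k}-(1\,2\cdots k)\otimes\gamma)_{\mathrm{tors}}$. *)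

theory Defs
  imports "HOL-Analysis.Analysis" "HOL-Number_Theory.Totient"
begin

fun mpow :: "'a::semiring_1^'n^'n \<Rightarrow> nat \<Rightarrow> 'a^'n^'n" where
  "mpow A 0 = mat 1"
| "mpow A (Suc n) = A ** mpow A n"

(* Z^k (x) Z^2 = Z^{2k}: vectors v with v i \<in> Z^2 the i-th pair (j_i, l_i), i < k
   (0-indexed), and v i = 0 for i \<ge> k. *)
definition Zvec :: "nat \<Rightarrow> (nat \<Rightarrow> int^2) set" where
  "Zvec k = {v. \<forall>i\<ge>k. v i = 0}"

(* (w (x) g) for w = the k-cycle (0 1 ... k-1), i.e. i \<mapsto> (i+1) mod k:
   the pair in slot i is moved to slot w i and g is applied to it. *)
definition cyc_tensor :: "nat \<Rightarrow> int^2^2 \<Rightarrow> (nat \<Rightarrow> int^2) \<Rightarrow> (nat \<Rightarrow> int^2)" where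
  "cyc_tensor k g v = (\<lambda>j. if j < k then g *v v ((j + k - 1) mod k) else 0)"

definition Mmap :: "nat \<Rightarrow> int^2^2 \<Rightarrow> (nat \<Rightarrow> int^2) \<Rightarrow> (nat \<Rightarrow> int^2)" where
  "Mmap k g v = v - cyc_tensor k g v"

definition Img :: "nat \<Rightarrow> int^2^2 \<Rightarrow> (nat \<Rightarrow> int^2) set" where
  "Img k g = Mmap k g ` Zvec k"

(* congruence modulo the image: cosets are the elements of the cokernel *)
definition coker_rel :: "nat \<Rightarrow> int^2^2 \<Rightarrow> ((nat \<Rightarrow> int^2) \<times> (nat \<Rightarrow> int^2)) set" where
  "coker_rel k g = {(u, v). u \<in> Zvec k \<and> v \<in> Zvec k \<and> u - v \<in> Img k g}"

(* the torsion subgroup of the cokernel, as a set of cosets *)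
definition coker_tors :: "nat \<Rightarrow> int^2^2 \<Rightarrow> (nat \<Rightarrow> int^2) set set" where
  "coker_tors k g =
     {v \<in> Zvec k. \<exists>n::nat. n > 0 \<and> (\<lambda>i. of_nat n *s v i) \<in> Img k g} // coker_rel k g"

definition cyc_perm :: "nat \<Rightarrow> (nat \<Rightarrow> int^2) \<Rightarrow> (nat \<Rightarrow> int^2)" where
  "cyc_perm k = cyc_tensor k (mat 1)"

definition cyc_orbit :: "nat \<Rightarrow> (nat \<Rightarrow> int^2) set \<Rightarrow> (nat \<Rightarrow> int^2) set set" where
  "cyc_orbit k C = {(cyc_perm k ^^ m) ` C | m. True}"

definition c_k :: "nat \<Rightarrow> int^2^2 \<Rightarrow> nat" where
  "c_k k g = card (cyc_orbit k ` coker_tors k g)"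

end

theory Submission
  imports Defs "HOL-Library.Function_Algebras"
begin

lemma mv2: "((B::'a::comm_ring_1^2^2) *v z)$1 = B$1$1*z$1 + B$1$2*(z$2::'a::comm_ring_1)"
           "((B::'a::comm_ring_1^2^2) *v z)$2 = B$2$1*z$1 + B$2$2*(z$2::'a::comm_ring_1)"
  by (simp_all add: matrix_vector_mult_def sum_2)

lemma vec2_eq: "(x::'a^2) = y \<longleftrightarrow> x$1 = y$1 \<and> x$2 = y$2"
  by (simp add: vec_eq_iff forall_2)

definition lat :: "int^2^2 \<Rightarrow> (int^2) set" where "lat B = range (\<lambda>z. B *v z)"
definition cosB :: "int^2^2 \<Rightarrow> int^2 \<Rightarrow> (int^2) set" where "cosB B x = {y. x - y \<in> lat B}"

lemma lat_0[simp]: "0 \<in> lat B" unfolding lat_def by (metis matrix_vector_mult_0_right rangeI)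
lemma lat_add: "a \<in> lat B \<Longrightarrow> b \<in> lat B \<Longrightarrow> a + b \<in> lat B"
  unfolding lat_def by (auto simp: matrix_vector_right_distrib[symmetric])
lemma lat_diff: "a \<in> lat B \<Longrightarrow> b \<in> lat B \<Longrightarrow> a - b \<in> lat B"
  unfolding lat_def by (auto simp: matrix_vector_mult_diff_distrib[symmetric])
lemma lat_neg: "a \<in> lat B \<Longrightarrow> - a \<in> lat B"
  using lat_diff[of 0 B a] by simp
lemma lat_I: "B *v z \<in> lat B" unfolding lat_def by simp

lemma cosB_eq: "cosB B x = cosB B y \<longleftrightarrow> x - y \<in> lat B"
proof
  assume "cosB B x = cosB B y"
  moreover have "y \<in> cosB B y" by (simp add: cosB_def)
  ultimately show "x - y \<in> lat B" by (auto simp: cosB_def)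
next
  assume h: "x - y \<in> lat B"
  show "cosB B x = cosB B y"
  proof (auto simp: cosB_def)
    fix z assume "x - z \<in> lat B"
    from lat_diff[OF this h] show "y - z \<in> lat B" by (simp add: algebra_simps)
  next
    fix z assume "y - z \<in> lat B"
    from lat_add[OF this h] show "x - z \<in> lat B" by (simp add: algebra_simps)
  qed
qed

lemma card_range_eq:
  assumes "\<And>x y. f x = f y \<longleftrightarrow> g x = g y"
  shows "card (range f) = card (range g)" "finite (range f) \<longleftrightarrow> finite (range g)"
proof -
  have e1: "g x = g (inv f (f x))" for x
    by (simp add: assms[symmetric] f_inv_into_f)
  have e: "range g = (\<lambda>u. g (inv f u)) ` range f"
  proof (rule set_eqI, rule iffI)
    fix y assume "y \<in> range g"
    then obtain x where "y = g x" by blast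
    then show "y \<in> (\<lambda>u. g (inv f u)) ` range f" using e1 by blast
  next
    fix y assume "y \<in> (\<lambda>u. g (inv f u)) ` range f"
    then show "y \<in> range g" by blast
  qed
  have i: "inj_on (\<lambda>u. g (inv f u)) (range f)"
    by (auto simp: inj_on_def assms[symmetric] f_inv_into_f)
  show "card (range f) = card (range g)" using card_image[OF i] e by simp
  show "finite (range f) \<longleftrightarrow> finite (range g)" using finite_image_iff[OF i] e by simp
qed

lemma lat_char:
  fixes B :: "int^2^2"
  assumes d: "det B \<noteq> 0"
  obtains g e h where "g > 0" "h \<noteq> 0" "g * h = det B"
    "\<And>z. z \<in> lat B \<longleftrightarrow> g dvd z$1 \<and> h dvd (z$2 - e * (z$1 div g))"
proof -
  define a where "a = B$1$1"
  define b where "b = B$1$2"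
  define c where "c = B$2$1"
  define dd where "dd = B$2$2"
  have dB: "det B = a*dd - b*c" by (simp add: det_2 a_def b_def c_def dd_def)
  define g where "g = gcd a b"
  have "a \<noteq> 0 \<or> b \<noteq> 0" using d dB by auto
  then have gpos: "g > 0" by (simp add: g_def)
  obtain a' where a': "a = g * a'" unfolding g_def by (meson gcd_dvd1 dvdE)
  obtain b' where b': "b = g * b'" unfolding g_def by (meson gcd_dvd2 dvdE)
  obtain s t where st: "s * a + t * b = g" unfolding g_def using bezout_int by blast
  have "g * (s * a' + t * b') = g * 1" using st by (simp add: a' b' algebra_simps)
  then have st1: "s * a' + t * b' = 1" using gpos by simp
  define h where "h = a' * dd - b' * c"
  define e where "e = c * s + dd * t"
  have gh: "g * h = det B" by (simp add: dB h_def a' b' algebra_simps)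
  have hnz: "h \<noteq> 0" using gh d by auto
  have "z \<in> lat B \<longleftrightarrow> g dvd z$1 \<and> h dvd (z$2 - e * (z$1 div g))" for z
  proof
    assume "z \<in> lat B"
    then obtain w where w: "z = B *v w" by (auto simp: lat_def)
    have z1: "z$1 = g * (a' * w$1 + b' * w$2)" by (simp add: w mv2 a_def[symmetric] b_def[symmetric] a' b' algebra_simps)
    have z2: "z$2 = c * w$1 + dd * w$2" by (simp add: w mv2 c_def dd_def)
    have q: "z$1 div g = a' * w$1 + b' * w$2" using z1 gpos by simp
    have "z$2 - e * (z$1 div g) = h * (s * w$2 - t * w$1)"
    proof -
      have "z$2 - e * (z$1 div g) = c * w$1 + dd * w$2 - (c * s + dd * t) * (a' * w$1 + b' * w$2)"
        by (simp add: z2 q e_def)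
      also have "\<dots> = c * w$1 * (s * a' + t * b') + dd * w$2 * (s * a' + t * b') - (c * s + dd * t) * (a' * w$1 + b' * w$2)"
        by (simp add: st1)
      also have "\<dots> = h * (s * w$2 - t * w$1)" by (simp add: h_def algebra_simps)
      finally show ?thesis .
    qed
    then show "g dvd z$1 \<and> h dvd (z$2 - e * (z$1 div g))" using z1 by simp
  next
    assume H: "g dvd z$1 \<and> h dvd (z$2 - e * (z$1 div g))"
    then obtain q where q: "z$1 = g * q" by (meson dvdE)
    obtain r where r: "z$2 - e * (z$1 div g) = h * r" using H by (meson dvdE)
    have qq: "z$1 div g = q" using q gpos by simp
    define w :: "int^2" where "w = vector [s * q - b' * r, t * q + a' * r]"
    have "z = B *v w"
    proof (simp add: vec2_eq mv2 a_def[symmetric] b_def[symmetric] c_def[symmetric] dd_def[symmetric] w_def, intro conjI)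
      have "a * (s * q - b' * r) + b * (t * q + a' * r) = g * q * (s * a' + t * b')"
        by (simp add: a' b' algebra_simps)
      then show "z$1 = a * (s * q - b' * r) + b * (t * q + a' * r)"
        using q st1 by simp
      have "z$2 = e * q + h * r" using r qq by simp
      then show "z$2 = c * (s * q - b' * r) + dd * (t * q + a' * r)"
        by (simp add: e_def h_def algebra_simps)
    qed
    then show "z \<in> lat B" by (simp add: lat_I)
  qed
  then show ?thesis using that gpos hnz gh by blast
qed

lemma card_cosB:
  fixes B :: "int^2^2"
  assumes d: "det B \<noteq> 0"
  shows "card (range (cosB B)) = nat \<bar>det B\<bar>" "finite (range (cosB B))"
proof -
  obtain g e h where g: "g > 0" and h: "h \<noteq> 0" and gh: "g * h = det B"
    and L: "\<And>z. z \<in> lat B \<longleftrightarrow> g dvd z$1 \<and> h dvd (z$2 - e * (z$1 div g))"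
    using lat_char[OF d] by metis
  define red where "red z = (z$1 mod g, (z$2 - e * (z$1 div g)) mod \<bar>h\<bar>)" for z :: "int^2"
  have key: "cosB B x = cosB B y \<longleftrightarrow> red x = red y" for x y
  proof -
    have "cosB B x = cosB B y \<longleftrightarrow> g dvd (x$1 - y$1) \<and> h dvd ((x$2 - y$2) - e * ((x$1 - y$1) div g))"
      by (simp add: cosB_eq L)
    also have "\<dots> \<longleftrightarrow> red x = red y"
    proof (cases "g dvd (x$1 - y$1)")
      case True
      then have m: "x$1 mod g = y$1 mod g" by (simp add: mod_eq_dvd_iff)
      have "x$1 - y$1 = g * (x$1 div g) - g * (y$1 div g)"
        using m mult_div_mod_eq[of g "x$1"] mult_div_mod_eq[of g "y$1"]
        by linarith
      then have "x$1 - y$1 = g * (x$1 div g - y$1 div g)"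
        by (simp add: right_diff_distrib)
      then have dv: "(x$1 - y$1) div g = x$1 div g - y$1 div g" using g by simp
      have "(x$2 - y$2) - e * ((x$1 - y$1) div g) = (x$2 - e * (x$1 div g)) - (y$2 - e * (y$1 div g))"
        by (simp add: dv algebra_simps)
      moreover have "h dvd (X - Y) \<longleftrightarrow> X mod \<bar>h\<bar> = Y mod \<bar>h\<bar>" for X Y :: int
        by (simp add: mod_eq_dvd_iff)
      ultimately show ?thesis using True m
        unfolding red_def prod.inject by presburger
    next
      case False
      have "x$1 mod g \<noteq> y$1 mod g" using False by (simp add: mod_eq_dvd_iff)
      then have "red x \<noteq> red y" unfolding red_def by simp
      then show ?thesis using False by blast
    qed
    finally show ?thesis .
  qed
  have rr: "range red = {0..<g} \<times> {0..<\<bar>h\<bar>}"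
  proof (rule set_eqI, rule iffI)
    fix p assume "p \<in> range red"
    then show "p \<in> {0..<g} \<times> {0..<\<bar>h\<bar>}" using g h by (auto simp: red_def)
  next
    fix p assume p: "p \<in> {0..<g} \<times> {0..<\<bar>h\<bar>}"
    obtain r1 r2 where pp: "p = (r1, r2)" by (cases p)
    have "red (vector [r1, r2]) = p" using p g by (simp add: red_def pp)
    then show "p \<in> range red" by (metis rangeI)
  qed
  have "card (range red) = nat \<bar>det B\<bar>"
    using g h by (simp add: rr card_cartesian_product gh[symmetric] abs_mult nat_mult_distrib)
  then show "card (range (cosB B)) = nat \<bar>det B\<bar>" using card_range_eq(1)[of "cosB B" red, OF key] by simp
  show "finite (range (cosB B))" using card_range_eq(2)[of "cosB B" red, OF key] rr by simp
qed



lemma mpow_add: "mpow A (m + n) = mpow A m ** mpow A n"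
  by (induction m) (simp_all add: matrix_mul_assoc)

lemma mpow_Suc': "mpow A (Suc n) = mpow A n ** A"
  using mpow_add[of A n 1] by simp

lemma mpow_comm: "mpow A m ** mpow A n = mpow A n ** mpow A m"
  by (metis mpow_add add.commute)

lemma mpow_mult: "mpow A (m * n) = mpow (mpow A m) n"
  by (induction n) (simp_all add: mpow_add)

lemma mpow_v_add: "mpow A m *v (mpow A n *v x) = mpow A (m + n) *v x"
  by (simp add: mpow_add matrix_vector_mul_assoc)

lemma det_mpow: "det (mpow (A::'a::comm_ring_1^'n^'n) n) = det A ^ n"
  by (induction n) (simp_all add: det_mul)

lemma det_I_minus:
  fixes A :: "int^2^2"
  shows "det (mat 1 - A) = 1 - trace A + det A"
  by (simp add: det_2 trace_def sum_2 mat_def algebra_simps)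

definition adjv :: "int^2^2 \<Rightarrow> int^2 \<Rightarrow> int^2" where
  "adjv A x = vector [A$2$2 * x$1 - A$1$2 * x$2, - A$2$1 * x$1 + A$1$1 * x$2]"

lemma adjv_right: "A *v adjv A x = det A *s x"
  by (simp add: vec2_eq mv2 adjv_def det_2 algebra_simps)

lemma adjv_left: "adjv A (A *v x) = det A *s x"
  by (simp add: vec2_eq mv2 adjv_def det_2 algebra_simps)

lemma mv_inj:
  fixes A :: "int^2^2"
  assumes "det A \<noteq> 0" "A *v x = A *v y" shows "x = y"
proof -
  have "det A *s x = det A *s y" using adjv_left[of A x] adjv_left[of A y] assms(2) by simp
  then show ?thesis using assms(1) by (simp add: vec2_eq)
qed

lemma det_smult_lat: "det B *s x \<in> lat B"
  using adjv_right[of B x] lat_I[of B "adjv B x"] by simp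

lemma mv_lat_comm:
  assumes "A ** B = B ** A" "z \<in> lat B" shows "A *v z \<in> lat B"
proof -
  obtain w where "z = B *v w" using assms(2) by (auto simp: lat_def)
  then have "A *v z = B *v (A *v w)" using assms(1) by (simp add: matrix_vector_mul_assoc)
  then show ?thesis by (simp add: lat_I)
qed

lemma mm_diff_l: "(A::'a::comm_ring_1^'n^'m) ** (B - C) = A ** B - A ** C"
  by (simp add: matrix_matrix_mult_def vec_eq_iff sum_subtractf right_diff_distrib)

lemma mm_diff_r: "((A::'a::comm_ring_1^'n^'m) - B) ** C = A ** C - B ** C"
  by (simp add: matrix_matrix_mult_def vec_eq_iff sum_subtractf left_diff_distrib)

lemma mv_diff: "(A::'a::comm_ring_1^'n^'m) *v (x - y) = A *v x - A *v y"
  by (simp add: matrix_vector_mult_diff_distrib)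

context
  fixes \<gamma> :: "int^2^2" and k :: nat
begin

definition "BB = mat 1 - mpow \<gamma> k"
definition "fixset d = {x. mpow \<gamma> d *v x - x \<in> lat BB}"

lemma BB_comm: "mpow \<gamma> a ** BB = BB ** mpow \<gamma> a"
  by (simp add: BB_def mm_diff_l mm_diff_r mpow_comm)

lemma lat_pow: "z \<in> lat BB \<Longrightarrow> mpow \<gamma> a *v z \<in> lat BB"
  using BB_comm mv_lat_comm by blast

lemma fix_k: "mpow \<gamma> k *v z - z \<in> lat BB"
proof -
  have "mpow \<gamma> k *v z - z = - (BB *v z)"
    by (simp add: BB_def matrix_vector_mult_diff_rdistrib)
  then show ?thesis using lat_neg lat_I by metis
qed

lemma fix_mult: "x \<in> fixset d \<Longrightarrow> x \<in> fixset (d * j)"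
proof (induction j)
  case 0 then show ?case by (simp add: fixset_def)
next
  case (Suc j)
  have e: "mpow \<gamma> (d * Suc j) *v x - x
     = mpow \<gamma> (d * j) *v (mpow \<gamma> d *v x - x) + (mpow \<gamma> (d * j) *v x - x)"
    by (simp add: mv_diff mpow_v_add algebra_simps)
  have "mpow \<gamma> d *v x - x \<in> lat BB" "mpow \<gamma> (d * j) *v x - x \<in> lat BB"
    using Suc by (simp_all add: fixset_def)
  then have "mpow \<gamma> (d * Suc j) *v x - x \<in> lat BB" unfolding e using lat_pow lat_add by blast
  then show ?case by (simp add: fixset_def)
qed

lemma fixset_gcd:
  assumes "k > 0"
  shows "fixset a = fixset (gcd a k)"
proof
  show "fixset (gcd a k) \<subseteq> fixset a"
  proof
    fix x assume "x \<in> fixset (gcd a k)"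
    moreover obtain j where "a = gcd a k * j" by (meson dvdE gcd_dvd1)
    ultimately show "x \<in> fixset a" using fix_mult by metis
  qed
next
  show "fixset a \<subseteq> fixset (gcd a k)"
  proof
    fix x assume xa: "x \<in> fixset a"
    obtain u v where uv: "k * u = a * v + gcd k a" using bezout_nat[of k a] assms by auto
    have xk: "x \<in> fixset k" using fix_k by (simp add: fixset_def)
    have 1: "mpow \<gamma> (k * u) *v x - x \<in> lat BB" using fix_mult[OF xk] by (simp add: fixset_def)
    have 2: "mpow \<gamma> (a * v) *v x - x \<in> lat BB" using fix_mult[OF xa] by (simp add: fixset_def)
    define g where "g = gcd a k"
    have "mpow \<gamma> (k * u) *v x = mpow \<gamma> g *v (mpow \<gamma> (a * v) *v x)"
      by (simp add: uv mpow_v_add g_def gcd.commute add.commute)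
    then have "mpow \<gamma> g *v x - x = (mpow \<gamma> (k * u) *v x - x) - mpow \<gamma> g *v (mpow \<gamma> (a * v) *v x - x)"
      by (simp add: mv_diff)
    then have "mpow \<gamma> g *v x - x \<in> lat BB" using 1 2 lat_pow lat_diff by metis
    then show "x \<in> fixset (gcd a k)" by (simp add: fixset_def g_def)
  qed
qed

end



lemma mm_add_r: "((A::'a::comm_ring_1^'n^'m) + B) ** C = A ** C + B ** C"
  by (simp add: matrix_matrix_mult_def vec_eq_iff sum.distrib distrib_right)

lemma mv_neg: "(A::'a::comm_ring_1^'n^'m) *v (- x) = - (A *v x)"
  by (metis mv_diff diff_0 matrix_vector_mult_0_right)

context
  fixes \<gamma> :: "int^2^2" and k :: nat
begin

lemma telescope:
  "(mat 1 - mpow \<gamma> d) ** (\<Sum>i<n. mpow \<gamma> (d * i)) = mat 1 - mpow \<gamma> (d * n)"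
  "(\<Sum>i<n. mpow \<gamma> (d * i)) ** (mat 1 - mpow \<gamma> d) = mat 1 - mpow \<gamma> (d * n)"
proof (induction n)
  case 0
  { case 1 show ?case by simp }
  { case 2 show ?case by simp }
next
  case (Suc n)
  have e: "mpow \<gamma> d ** mpow \<gamma> (d * n) = mpow \<gamma> (d * Suc n)"
    by (simp add: mpow_add[symmetric])
  have e2: "mpow \<gamma> (d * n) ** mpow \<gamma> d = mpow \<gamma> (d * Suc n)"
    by (simp add: mpow_add[symmetric] add.commute)
  { case 1
    have "(mat 1 - mpow \<gamma> d) ** (\<Sum>i<Suc n. mpow \<gamma> (d * i))
       = (mat 1 - mpow \<gamma> d) ** (\<Sum>i<n. mpow \<gamma> (d * i)) + (mat 1 - mpow \<gamma> d) ** mpow \<gamma> (d * n)"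
      by (simp add: matrix_add_ldistrib)
    also have "\<dots> = (mat 1 - mpow \<gamma> (d * n)) + (mpow \<gamma> (d * n) - mpow \<gamma> (d * Suc n))"
      using Suc.IH(1) by (simp add: mm_diff_r e)
    also have "\<dots> = mat 1 - mpow \<gamma> (d * Suc n)" by (simp add: algebra_simps)
    finally show ?case . }
  { case 2
    have "(\<Sum>i<Suc n. mpow \<gamma> (d * i)) ** (mat 1 - mpow \<gamma> d)
       = (\<Sum>i<n. mpow \<gamma> (d * i)) ** (mat 1 - mpow \<gamma> d) + mpow \<gamma> (d * n) ** (mat 1 - mpow \<gamma> d)"
      by (simp add: mm_add_r)
    also have "\<dots> = (mat 1 - mpow \<gamma> (d * n)) + (mpow \<gamma> (d * n) - mpow \<gamma> (d * Suc n))"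
      using Suc.IH(2) by (simp add: mm_diff_l e2)
    also have "\<dots> = mat 1 - mpow \<gamma> (d * Suc n)" by (simp add: algebra_simps)
    finally show ?case . }
qed

lemma card_fixset:
  assumes dk: "d dvd k" and dB: "det (BB \<gamma> k) \<noteq> 0"
  shows "card (cosB (BB \<gamma> k) ` fixset \<gamma> k d) = nat \<bar>det (mat 1 - mpow \<gamma> d)\<bar>"
    "finite (cosB (BB \<gamma> k) ` fixset \<gamma> k d)"
proof -
  define D where "D = mat 1 - mpow \<gamma> d"
  define S where "S = (\<Sum>i<k div d. mpow \<gamma> (d * i))"
  have kk: "d * (k div d) = k" using dk by simp
  have DS: "D ** S = BB \<gamma> k" and SD: "S ** D = BB \<gamma> k"
    using telescope[of d "k div d"] by (simp_all add: D_def S_def kk BB_def)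
  have dDS: "det D * det S \<noteq> 0" using dB DS det_mul by metis
  then have dD: "det D \<noteq> 0" and dS: "det S \<noteq> 0" by auto
  have fs: "fixset \<gamma> k d = range (\<lambda>z. S *v z)"
  proof (rule set_eqI, rule iffI)
    fix x assume "x \<in> fixset \<gamma> k d"
    then obtain w where w: "mpow \<gamma> d *v x - x = BB \<gamma> k *v w" by (auto simp: fixset_def lat_def)
    have "D *v x = BB \<gamma> k *v (- w)"
      using w by (simp add: D_def matrix_vector_mult_diff_rdistrib mv_neg algebra_simps)
    also have "\<dots> = D *v (S *v (- w))" by (simp add: DS matrix_vector_mul_assoc)
    finally have "x = S *v (- w)" using mv_inj[OF dD] by blast
    then show "x \<in> range (\<lambda>z. S *v z)" by blast
  next
    fix x assume "x \<in> range (\<lambda>z. S *v z)"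
    then obtain z where z: "x = S *v z" by blast
    have "mpow \<gamma> d *v x - x = - (D *v x)"
      by (simp add: D_def matrix_vector_mult_diff_rdistrib)
    also have "\<dots> = - (BB \<gamma> k *v z)" by (simp add: z matrix_vector_mul_assoc DS)
    finally show "x \<in> fixset \<gamma> k d" by (simp add: fixset_def lat_neg lat_I)
  qed
  have key: "cosB (BB \<gamma> k) (S *v z) = cosB (BB \<gamma> k) (S *v z') \<longleftrightarrow> cosB D z = cosB D z'" for z z'
  proof -
    have "S *v z - S *v z' \<in> lat (BB \<gamma> k) \<longleftrightarrow> z - z' \<in> lat D"
    proof
      assume "S *v z - S *v z' \<in> lat (BB \<gamma> k)"
      then obtain w where "S *v z - S *v z' = BB \<gamma> k *v w" by (auto simp: lat_def)
      then have "S *v (z - z') = S *v (D *v w)" by (simp add: mv_diff matrix_vector_mul_assoc SD)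
      then have "z - z' = D *v w" using mv_inj[OF dS] by blast
      then show "z - z' \<in> lat D" by (simp add: lat_I)
    next
      assume "z - z' \<in> lat D"
      then obtain w where "z - z' = D *v w" by (auto simp: lat_def)
      then have "S *v z - S *v z' = BB \<gamma> k *v w" by (simp add: mv_diff[symmetric] matrix_vector_mul_assoc SD)
      then show "S *v z - S *v z' \<in> lat (BB \<gamma> k)" by (simp add: lat_I)
    qed
    then show ?thesis by (simp add: cosB_eq)
  qed
  have im: "cosB (BB \<gamma> k) ` fixset \<gamma> k d = range (\<lambda>z. cosB (BB \<gamma> k) (S *v z))"
    unfolding fs by (simp add: image_image)
  show "card (cosB (BB \<gamma> k) ` fixset \<gamma> k d) = nat \<bar>det (mat 1 - mpow \<gamma> d)\<bar>"
    unfolding im card_range_eq(1)[of "\<lambda>z. cosB (BB \<gamma> k) (S *v z)" "cosB D", OF key]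
    using card_cosB(1)[OF dD] by (simp add: D_def)
  show "finite (cosB (BB \<gamma> k) ` fixset \<gamma> k d)"
    unfolding im card_range_eq(2)[of "\<lambda>z. cosB (BB \<gamma> k) (S *v z)" "cosB D", OF key]
    using card_cosB(2)[OF dD] .
qed

end

lemma det_I_mpow:
  fixes \<gamma> :: "int^2^2"
  assumes "det \<gamma> = 1"
  shows "det (mat 1 - mpow \<gamma> d) = 2 - trace (mpow \<gamma> d)"
  using assms by (simp add: det_I_minus det_mpow)



definition phi :: "nat \<Rightarrow> int^2^2 \<Rightarrow> (nat \<Rightarrow> int^2) \<Rightarrow> int^2" where
  "phi k g v = (\<Sum>j<k. mpow g (k - j) *v v j)"
definition e0 :: "int^2 \<Rightarrow> nat \<Rightarrow> int^2" where
  "e0 x = (\<lambda>j. if j = 0 then x else 0)"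
definition VV :: "nat \<Rightarrow> int^2^2 \<Rightarrow> int^2 \<Rightarrow> nat \<Rightarrow> int^2" where
  "VV k g y = (\<lambda>i. if i < k then mpow g i *v y else 0)"
definition WW :: "nat \<Rightarrow> int^2^2 \<Rightarrow> (nat \<Rightarrow> int^2) \<Rightarrow> nat \<Rightarrow> int^2" where
  "WW k g u = (\<lambda>i. if i < k then (\<Sum>j\<le>i. mpow g (i - j) *v u j) else 0)"

lemma mv_sum: "(A::'a::comm_ring_1^'n^'m) *v sum f S = sum (\<lambda>x. A *v f x) S"
proof (cases "finite S")
  case True then show ?thesis by induction (simp_all add: matrix_vector_right_distrib)
qed simp

lemma mv_smult: "(A::int^2^2) *v (c *s x) = c *s (A *v x)"
  by (simp add: vec2_eq mv2 algebra_simps)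

lemma Zvec_0[simp]: "0 \<in> Zvec k" by (simp add: Zvec_def)
lemma Zvec_add: "a \<in> Zvec k \<Longrightarrow> b \<in> Zvec k \<Longrightarrow> a + b \<in> Zvec k" by (simp add: Zvec_def)
lemma Zvec_diff: "a \<in> Zvec k \<Longrightarrow> b \<in> Zvec k \<Longrightarrow> a - b \<in> Zvec k" by (simp add: Zvec_def)
lemma Zvec_smult: "a \<in> Zvec k \<Longrightarrow> (\<lambda>i. c *s a i) \<in> Zvec k" by (simp add: Zvec_def)
lemma Zvec_e0: "0 < k \<Longrightarrow> e0 x \<in> Zvec k" by (simp add: Zvec_def e0_def)
lemma Zvec_VV: "VV k g y \<in> Zvec k" by (simp add: Zvec_def VV_def)
lemma Zvec_WW: "WW k g y \<in> Zvec k" by (simp add: Zvec_def WW_def)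

lemma cyc_tensor_Suc: "cyc_tensor (Suc n) g v j = (if j < Suc n then g *v v ((j + n) mod Suc n) else 0)"
  by (simp add: cyc_tensor_def)

lemma cyc_tensor_diff: "cyc_tensor k g (a - b) = cyc_tensor k g a - cyc_tensor k g b"
  by (simp add: cyc_tensor_def fun_eq_iff mv_diff)
lemma cyc_tensor_add: "cyc_tensor k g (a + b) = cyc_tensor k g a + cyc_tensor k g b"
  by (simp add: cyc_tensor_def fun_eq_iff matrix_vector_right_distrib)

lemma Mmap_diff: "Mmap k g (a - b) = Mmap k g a - Mmap k g b"
  by (simp add: Mmap_def cyc_tensor_diff)
lemma Mmap_add: "Mmap k g (a + b) = Mmap k g a + Mmap k g b"
  by (simp add: Mmap_def cyc_tensor_add)
lemma Mmap_Zvec: "a \<in> Zvec k \<Longrightarrow> Mmap k g a \<in> Zvec k"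
  by (simp add: Zvec_def Mmap_def cyc_tensor_def)

lemma Img_0: "0 \<in> Img k g"
proof -
  have "Mmap k g 0 = 0" using Mmap_diff[of k g 0 0] by simp
  then show ?thesis unfolding Img_def by (metis Zvec_0 image_eqI)
qed
lemma Img_add: "a \<in> Img k g \<Longrightarrow> b \<in> Img k g \<Longrightarrow> a + b \<in> Img k g"
  unfolding Img_def by (auto simp: Mmap_add[symmetric] intro!: imageI Zvec_add)
lemma Img_diff: "a \<in> Img k g \<Longrightarrow> b \<in> Img k g \<Longrightarrow> a - b \<in> Img k g"
  unfolding Img_def by (auto simp: Mmap_diff[symmetric] intro!: imageI Zvec_diff)
lemma Img_Zvec: "a \<in> Img k g \<Longrightarrow> a \<in> Zvec k"
  unfolding Img_def using Mmap_Zvec by auto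

lemma phi_diff: "phi k g (a - b) = phi k g a - phi k g b"
  by (simp add: phi_def mv_diff sum_subtractf)
lemma phi_smult: "phi k g (\<lambda>i. c *s a i) = c *s phi k g a"
  by (simp add: phi_def mv_smult sum_cmul)

context
  fixes g :: "int^2^2" and n :: nat
begin


lemma P_gamma: "mpow g a *v (g *v y) = mpow g (Suc a) *v y"
  by (simp only: mpow_Suc' matrix_vector_mul_assoc)
lemma gamma_P: "g *v (mpow g a *v y) = mpow g (Suc a) *v y"
  by (simp add: matrix_vector_mul_assoc)

lemma phi_Mmap: "phi (Suc n) g (Mmap (Suc n) g w) \<in> lat (BB g (Suc n))"
proof -
  have s1: "phi (Suc n) g w = (\<Sum>j<n. mpow g (Suc n - j) *v w j) + mpow g 1 *v w n"
    by (simp add: phi_def)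
  have "phi (Suc n) g (cyc_tensor (Suc n) g w) = (\<Sum>j<Suc n. mpow g (Suc n - j) *v (g *v w ((j + n) mod Suc n)))"
    by (simp add: phi_def cyc_tensor_Suc)
  also have "\<dots> = mpow g (Suc n) *v (g *v w n) + (\<Sum>i<n. mpow g (n - i) *v (g *v w ((Suc i + n) mod Suc n)))"
    unfolding sum.lessThan_Suc_shift by simp
  also have "(\<Sum>i<n. mpow g (n - i) *v (g *v w ((Suc i + n) mod Suc n))) = (\<Sum>i<n. mpow g (Suc n - i) *v w i)"
  proof (rule sum.cong[OF refl])
    fix i assume "i \<in> {..<n}"
    then have "(Suc i + n) mod Suc n = i" "Suc n - i = Suc (n - i)" by (auto simp: mod_if)
    then show "mpow g (n - i) *v (g *v w ((Suc i + n) mod Suc n)) = mpow g (Suc n - i) *v w i"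
      by (simp add: P_gamma)
  qed
  finally have s2: "phi (Suc n) g (cyc_tensor (Suc n) g w) = mpow g (Suc (Suc n)) *v w n + (\<Sum>i<n. mpow g (Suc n - i) *v w i)"
    by (simp only: P_gamma)
  have "phi (Suc n) g (Mmap (Suc n) g w) = mpow g 1 *v w n - mpow g (Suc (Suc n)) *v w n"
    by (simp add: Mmap_def phi_diff s1 s2)
  also have "\<dots> = BB g (Suc n) *v (g *v w n)"
    using P_gamma[of "Suc n" "w n"] by (simp add: BB_def matrix_vector_mult_diff_rdistrib)
  finally show ?thesis by (simp add: lat_I)
qed

lemma Mmap_VV: "Mmap (Suc n) g (VV (Suc n) g y) = e0 (BB g (Suc n) *v y)"
proof
  fix j show "Mmap (Suc n) g (VV (Suc n) g y) j = e0 (BB g (Suc n) *v y) j"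
  proof (cases "j < Suc n")
    case True
    show ?thesis
    proof (cases j)
      case 0
      then show ?thesis
        by (simp add: Mmap_def cyc_tensor_Suc VV_def e0_def BB_def matrix_vector_mult_diff_rdistrib gamma_P)
    next
      case (Suc i)
      then have "(j + n) mod Suc n = i" using True by (simp add: mod_if)
      then show ?thesis using True Suc
        by (simp add: Mmap_def cyc_tensor_Suc VV_def e0_def gamma_P)
    qed
  next
    case False
    then show ?thesis by (simp add: Mmap_def cyc_tensor_Suc VV_def e0_def)
  qed
qed

lemma gamma_WW_sum: "g *v (\<Sum>j\<le>i. mpow g (i - j) *v u j) = (\<Sum>j\<le>i. mpow g (Suc i - j) *v u j)"
  unfolding mv_sum
proof (rule sum.cong[OF refl])
  fix j assume "j \<in> {..i}"
  then have "Suc i - j = Suc (i - j)" by auto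
  then show "g *v (mpow g (i - j) *v u j) = mpow g (Suc i - j) *v u j" by (simp add: gamma_P)
qed

lemma Mmap_WW:
  assumes u: "u \<in> Zvec (Suc n)"
  shows "Mmap (Suc n) g (WW (Suc n) g u) = u - e0 (phi (Suc n) g u)"
proof
  fix j show "Mmap (Suc n) g (WW (Suc n) g u) j = (u - e0 (phi (Suc n) g u)) j"
  proof (cases "j < Suc n")
    case True
    show ?thesis
    proof (cases j)
      case 0
      have "g *v WW (Suc n) g u n = phi (Suc n) g u"
        by (simp add: WW_def gamma_WW_sum phi_def lessThan_Suc_atMost)
      then show ?thesis using 0
        by (simp add: Mmap_def cyc_tensor_Suc e0_def WW_def)
    next
      case (Suc i)
      then have m: "(j + n) mod Suc n = i" using True by (simp add: mod_if)
      have "WW (Suc n) g u j - g *v WW (Suc n) g u i = u j"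
        using True Suc by (simp add: WW_def gamma_WW_sum)
      then show ?thesis using True Suc m
        by (simp add: Mmap_def cyc_tensor_Suc e0_def)
    qed
  next
    case False
    then show ?thesis using u by (simp add: Mmap_def cyc_tensor_Suc WW_def e0_def Zvec_def)
  qed
qed

lemma e0_diff: "e0 (x - y) = e0 x - e0 y"
  by (simp add: e0_def fun_eq_iff)

lemma phi_e0: "phi (Suc n) g (e0 x) = mpow g (Suc n) *v x"
proof -
  have "phi (Suc n) g (e0 x) = (\<Sum>j<Suc n. if j = 0 then mpow g (Suc n - j) *v x else 0)"
    unfolding phi_def e0_def by (rule sum.cong) auto
  also have "\<dots> = mpow g (Suc n) *v x" by (simp add: sum.delta)
  finally show ?thesis .
qed

lemma Img_char:
  assumes u: "u \<in> Zvec (Suc n)"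
  shows "u \<in> Img (Suc n) g \<longleftrightarrow> phi (Suc n) g u \<in> lat (BB g (Suc n))"
proof
  assume "u \<in> Img (Suc n) g"
  then obtain w where "w \<in> Zvec (Suc n)" "u = Mmap (Suc n) g w" by (auto simp: Img_def)
  then show "phi (Suc n) g u \<in> lat (BB g (Suc n))" using phi_Mmap by simp
next
  assume "phi (Suc n) g u \<in> lat (BB g (Suc n))"
  then obtain y where y: "phi (Suc n) g u = BB g (Suc n) *v y" by (auto simp: lat_def)
  have "u = Mmap (Suc n) g (WW (Suc n) g u) + Mmap (Suc n) g (VV (Suc n) g y)"
    by (simp add: Mmap_WW[OF u] Mmap_VV y)
  also have "\<dots> = Mmap (Suc n) g (WW (Suc n) g u + VV (Suc n) g y)" by (simp add: Mmap_add)
  finally show "u \<in> Img (Suc n) g" unfolding Img_def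
    by (metis Zvec_add Zvec_VV Zvec_WW image_eqI)
qed

lemma rel_char:
  "coker_rel (Suc n) g = {(u, v). u \<in> Zvec (Suc n) \<and> v \<in> Zvec (Suc n) \<and> phi (Suc n) g u - phi (Suc n) g v \<in> lat (BB g (Suc n))}"
  unfolding coker_rel_def using Img_char Zvec_diff phi_diff by auto

lemma rel_equiv: "equiv (Zvec (Suc n)) (coker_rel (Suc n) g)"
proof (rule equivI)
  show "coker_rel (Suc n) g \<subseteq> Zvec (Suc n) \<times> Zvec (Suc n)" by (auto simp: rel_char)
  show "refl_on (Zvec (Suc n)) (coker_rel (Suc n) g)"
    by (auto simp: refl_on_def rel_char)
  show "sym (coker_rel (Suc n) g)"
  proof (rule symI)
    fix a b assume "(a, b) \<in> coker_rel (Suc n) g"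
    then show "(b, a) \<in> coker_rel (Suc n) g"
      using lat_neg[of "phi (Suc n) g a - phi (Suc n) g b"] by (simp add: rel_char)
  qed
  show "trans (coker_rel (Suc n) g)"
  proof (rule transI)
    fix a b c assume "(a, b) \<in> coker_rel (Suc n) g" "(b, c) \<in> coker_rel (Suc n) g"
    then show "(a, c) \<in> coker_rel (Suc n) g"
      using lat_add[of "phi (Suc n) g a - phi (Suc n) g b" _ "phi (Suc n) g b - phi (Suc n) g c"] by (simp add: rel_char)
  qed
qed

lemma tors_all:
  assumes dB: "det (BB g (Suc n)) \<noteq> 0"
  shows "coker_tors (Suc n) g = Zvec (Suc n) // coker_rel (Suc n) g"
proof -
  have "\<exists>m::nat. m > 0 \<and> (\<lambda>i. of_nat m *s v i) \<in> Img (Suc n) g" if v: "v \<in> Zvec (Suc n)" for v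
  proof (intro exI conjI)
    show "nat \<bar>det (BB g (Suc n))\<bar> > 0" using dB by simp
    have "of_nat (nat \<bar>det (BB g (Suc n))\<bar>) *s phi (Suc n) g v \<in> lat (BB g (Suc n))"
    proof (cases "det (BB g (Suc n)) \<ge> 0")
      case True then show ?thesis using det_smult_lat by simp
    next
      case False
      then have "of_nat (nat \<bar>det (BB g (Suc n))\<bar>) *s phi (Suc n) g v = - (det (BB g (Suc n)) *s phi (Suc n) g v)"
        by (simp add: vec2_eq)
      then show ?thesis using det_smult_lat lat_neg by metis
    qed
    then show "(\<lambda>i. of_nat (nat \<bar>det (BB g (Suc n))\<bar>) *s v i) \<in> Img (Suc n) g"
      using Img_char[OF Zvec_smult[OF v]] by (simp add: phi_smult)
  qed
  then have "{v \<in> Zvec (Suc n). \<exists>m::nat. m > 0 \<and> (\<lambda>i. of_nat m *s v i) \<in> Img (Suc n) g} = Zvec (Suc n)" by blast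
  then show ?thesis by (simp add: coker_tors_def)
qed

end



lemma gcd_sum:
  fixes f :: "nat \<Rightarrow> 'b::comm_semiring_1"
  assumes k: "k > 0"
  shows "(\<Sum>m<k. f (gcd m k)) = (\<Sum>d | d dvd k. of_nat (totient (k div d)) * f d)"
proof -
  have "(\<Sum>m<k. f (gcd m k)) = (\<Sum>m\<in>{0<..k}. f (gcd m k))"
    by (rule sum.reindex_bij_witness[where j = "\<lambda>a. if a = 0 then k else a" and i = "\<lambda>b. if b = k then 0 else b"])
       (use k in auto)
  also have "\<dots> = (\<Sum>d | d dvd k. (\<Sum>m\<in>{m\<in>{0<..k}. gcd m k = d}. f (gcd m k)))"
    by (rule sum.group[symmetric]) (use k in auto)
  also have "\<dots> = (\<Sum>d | d dvd k. of_nat (totient (k div d)) * f d)"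
  proof (rule sum.cong[OF refl])
    fix d assume d: "d \<in> {d. d dvd k}"
    have "(\<Sum>m\<in>{m\<in>{0<..k}. gcd m k = d}. f (gcd m k)) = (\<Sum>m\<in>{m\<in>{0<..k}. gcd m k = d}. f d)"
      by (rule sum.cong) auto
    also have "\<dots> = of_nat (card {m\<in>{0<..k}. gcd m k = d}) * f d" by simp
    also have "card {m\<in>{0<..k}. gcd m k = d} = totient (k div d)"
      using card_gcd_eq_totient[OF k] d by simp
    finally show "(\<Sum>m\<in>{m\<in>{0<..k}. gcd m k = d}. f (gcd m k)) = of_nat (totient (k div d)) * f d" .
  qed
  finally show ?thesis .
qed

lemma funpow_mult_fix:
  assumes "(F ^^ p) x = x" shows "(F ^^ (p * q)) x = x"
proof (induction q)
  case (Suc q)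
  have "(F ^^ (p * Suc q)) x = (F ^^ (p * q + p)) x" by (simp add: add.commute)
  also have "\<dots> = (F ^^ (p * q)) ((F ^^ p) x)" by (simp only: funpow_add o_apply)
  finally have "(F ^^ (p * Suc q)) x = (F ^^ (p * q)) ((F ^^ p) x)" .
  then show ?case using Suc assms by simp
qed simp

lemma funpow_mod_fix:
  assumes "(F ^^ p) x = x" shows "(F ^^ m) x = (F ^^ (m mod p)) x"
proof -
  have e: "m mod p + p * (m div p) = m" by (rule mod_mult_div_eq)
  have "(F ^^ m) x = (F ^^ (m mod p)) ((F ^^ (p * (m div p))) x)"
    by (metis e funpow_add comp_apply)
  then show ?thesis using funpow_mult_fix[OF assms] by simp
qed

lemma burnside_cyc:
  fixes F :: "'a \<Rightarrow> 'a"
  assumes fin: "finite X" and FX: "\<And>x. x \<in> X \<Longrightarrow> F x \<in> X"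
    and per: "\<And>x. x \<in> X \<Longrightarrow> (F ^^ k) x = x" and k: "k > 0"
  shows "card ((\<lambda>x. {(F ^^ m) x | m. True}) ` X) * k = (\<Sum>m<k. card {x\<in>X. (F ^^ m) x = x})"
proof -
  define orb where "orb x = {(F ^^ m) x | m. True}" for x
  have FmX: "(F ^^ m) x \<in> X" if "x \<in> X" for x m
    using that by (induction m) (simp_all add: FX)
  have orb_sub: "orb x \<subseteq> X" if "x \<in> X" for x using FmX that by (auto simp: orb_def)
  have orb_eq: "orb y = orb x" if x: "x \<in> X" and y: "y \<in> orb x" for x y
  proof -
    obtain a where a: "y = (F ^^ a) x" using y by (auto simp: orb_def)
    have "orb y \<subseteq> orb x"
    proof
      fix z assume "z \<in> orb y"
      then obtain b where "z = (F ^^ b) y" by (auto simp: orb_def)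
      then have "z = (F ^^ (b + a)) x" by (simp add: a funpow_add)
      then show "z \<in> orb x" by (auto simp: orb_def)
    qed
    moreover have "orb x \<subseteq> orb y"
    proof
      fix z assume "z \<in> orb x"
      then obtain b where b: "z = (F ^^ b) x" by (auto simp: orb_def)
      have "(F ^^ (k - a mod k)) y = (F ^^ (k - a mod k + a)) x" by (simp add: a funpow_add)
      also have "k - a mod k + a = k * Suc (a div k)"
      proof -
        have "k - a mod k + a = k - a mod k + (a mod k + k * (a div k))"
          using mod_mult_div_eq[of a k] by simp
        also have "\<dots> = k + k * (a div k)"
          by (simp only: add.assoc[symmetric] le_add_diff_inverse2[OF less_imp_le[OF mod_less_divisor[OF k, of a]]])
        finally show ?thesis by simp
      qed
      also have "(F ^^ (k * Suc (a div k))) x = x" by (rule funpow_mult_fix[OF per[OF x]])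
      finally have "x = (F ^^ (k - a mod k)) y" by simp
      then have "z = (F ^^ (b + (k - a mod k))) y" by (simp add: b funpow_add)
      then show "z \<in> orb y" by (auto simp: orb_def)
    qed
    ultimately show ?thesis by blast
  qed
  have self: "x \<in> orb x" for x by (auto simp: orb_def intro: exI[of _ 0])
  have point: "card {m\<in>{..<k}. (F ^^ m) x = x} * card (orb x) = k" if x: "x \<in> X" for x
  proof -
    define p where "p = (LEAST p. 0 < p \<and> (F ^^ p) x = x)"
    have ex: "0 < k \<and> (F ^^ k) x = x" using k per[OF x] by simp
    have p: "0 < p" "(F ^^ p) x = x" using LeastI[of "\<lambda>p. 0 < p \<and> (F ^^ p) x = x", OF ex] by (simp_all add: p_def)
    have pmin: "\<not> (0 < q \<and> (F ^^ q) x = x)" if "q < p" for q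
      using not_less_Least[of q "\<lambda>p. 0 < p \<and> (F ^^ p) x = x"] that by (simp add: p_def)
    have dvd_iff: "(F ^^ m) x = x \<longleftrightarrow> p dvd m" for m
    proof
      assume h: "(F ^^ m) x = x"
      have "(F ^^ (m mod p)) x = x" using funpow_mod_fix[OF p(2), of m] h by simp
      then have "m mod p = 0" using pmin[of "m mod p"] p(1) by (meson mod_less_divisor neq0_conv)
      then show "p dvd m" by (simp add: dvd_eq_mod_eq_0)
    next
      assume "p dvd m"
      then obtain q where "m = p * q" by (auto elim: dvdE)
      then show "(F ^^ m) x = x" using funpow_mult_fix[OF p(2)] by simp
    qed
    have pk: "p dvd k" using dvd_iff ex by blast
    have c1: "card {m\<in>{..<k}. (F ^^ m) x = x} = k div p"
    proof -
      have "{m\<in>{..<k}. (F ^^ m) x = x} = (\<lambda>i. p * i) ` {..<k div p}"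
      proof (rule set_eqI, rule iffI)
        fix m assume "m \<in> {m\<in>{..<k}. (F ^^ m) x = x}"
        then have m: "m < k" "p dvd m" using dvd_iff by auto
        then obtain i where i: "m = p * i" by (auto elim: dvdE)
        have "p * i < p * (k div p)" using m i pk by simp
        then have "i < k div p" by simp
        then show "m \<in> (\<lambda>i. p * i) ` {..<k div p}" using i by blast
      next
        fix m assume "m \<in> (\<lambda>i. p * i) ` {..<k div p}"
        then obtain i where i: "m = p * i" "i < k div p" by auto
        then have "p * i < p * (k div p)" using p(1) by simp
        then have "m < k" using i pk by simp
        then show "m \<in> {m\<in>{..<k}. (F ^^ m) x = x}" using dvd_iff i by auto
      qed
      moreover have "inj_on (\<lambda>i. p * i) {..<k div p}" using p(1) by (auto simp: inj_on_def)
      ultimately show ?thesis by (simp add: card_image)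
    qed
    have c2: "card (orb x) = p"
    proof -
      have "orb x = (\<lambda>i. (F ^^ i) x) ` {..<p}"
      proof (rule set_eqI, rule iffI)
        fix z assume "z \<in> orb x"
        then obtain m where "z = (F ^^ m) x" by (auto simp: orb_def)
        then have "z = (F ^^ (m mod p)) x" using funpow_mod_fix[OF p(2)] by simp
        then show "z \<in> (\<lambda>i. (F ^^ i) x) ` {..<p}" using p(1) by auto
      next
        fix z assume "z \<in> (\<lambda>i. (F ^^ i) x) ` {..<p}"
        then show "z \<in> orb x" by (auto simp: orb_def)
      qed
      moreover have "inj_on (\<lambda>i. (F ^^ i) x) {..<p}"
      proof (rule inj_onI)
        have aux: "False" if ij: "i < j" "j < p" "(F ^^ i) x = (F ^^ j) x" for i j
        proof -
          have "(F ^^ (p - j + i)) x = (F ^^ (p - j)) ((F ^^ i) x)" by (simp add: funpow_add)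
          also have "\<dots> = (F ^^ (p - j)) ((F ^^ j) x)" using ij by simp
          also have "\<dots> = (F ^^ (p - j + j)) x" by (simp only: funpow_add o_apply)
          also have "p - j + j = p" using ij by simp
          finally have "(F ^^ (p - j + i)) x = x" using p(2) by simp
          moreover have "0 < p - j + i" "p - j + i < p" using ij by auto
          ultimately show False using pmin by blast
        qed
        fix i j assume "i \<in> {..<p}" "j \<in> {..<p}" "(F ^^ i) x = (F ^^ j) x"
        then show "i = j" using aux[of i j] aux[of j i] by (metis lessThan_iff linorder_neq_iff)
      qed
      ultimately show ?thesis by (simp add: card_image)
    qed
    show ?thesis using c1 c2 pk by simp
  qed
  have "(\<Sum>m<k. card {x\<in>X. (F ^^ m) x = x}) = (\<Sum>m<k. \<Sum>x\<in>X. if (F ^^ m) x = x then 1 else 0)"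
    using fin by (simp add: sum.inter_filter[symmetric])
  also have "\<dots> = (\<Sum>x\<in>X. \<Sum>m<k. if (F ^^ m) x = x then 1 else 0)" by (rule sum.swap)
  also have "\<dots> = (\<Sum>x\<in>X. card {m\<in>{..<k}. (F ^^ m) x = x})"
    by (simp add: sum.inter_filter[symmetric])
  also have "\<dots> = (\<Sum>Ob\<in>orb ` X. \<Sum>x\<in>{x\<in>X. orb x = Ob}. card {m\<in>{..<k}. (F ^^ m) x = x})"
    by (rule sum.image_gen[OF fin])
  also have "\<dots> = (\<Sum>Ob\<in>orb ` X. k)"
  proof (rule sum.cong[OF refl])
    fix Ob assume "Ob \<in> orb ` X"
    then obtain x0 where x0: "x0 \<in> X" "Ob = orb x0" by blast
    have setO: "{x\<in>X. orb x = Ob} = Ob"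
    proof (rule set_eqI, rule iffI)
      fix x assume "x \<in> {x\<in>X. orb x = Ob}"
      then show "x \<in> Ob" using self[of x] by simp
    next
      fix x assume "x \<in> Ob"
      then have "x \<in> X" "orb x = Ob" using orb_sub[OF x0(1)] orb_eq[OF x0(1)] x0(2) by auto
      then show "x \<in> {x\<in>X. orb x = Ob}" by simp
    qed
    have "finite Ob" using x0 fin orb_sub finite_subset by blast
    then have cO: "card Ob > 0" using x0 self[of x0] card_gt_0_iff by blast
    have "(\<Sum>x\<in>Ob. card {m\<in>{..<k}. (F ^^ m) x = x}) = (\<Sum>x\<in>Ob. k div card Ob)"
    proof (rule sum.cong[OF refl])
      fix x assume xO: "x \<in> Ob"
      then have "x \<in> X" "orb x = Ob" using setO by blast+
      then have "card {m\<in>{..<k}. (F ^^ m) x = x} * card Ob = k" using point by metis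
      then show "card {m\<in>{..<k}. (F ^^ m) x = x} = k div card Ob" using cO by (metis nonzero_mult_div_cancel_right neq0_conv)
    qed
    also have "\<dots> = card Ob * (k div card Ob)" by simp
    also have "\<dots> = k"
    proof -
      have "card {m\<in>{..<k}. (F ^^ m) x0 = x0} * card Ob = k" using point x0 by metis
      then show ?thesis by (metis dvd_triv_right dvd_mult_div_cancel)
    qed
    finally show "(\<Sum>x\<in>{x\<in>X. orb x = Ob}. card {m\<in>{..<k}. (F ^^ m) x = x}) = k" using setO by simp
  qed
  also have "\<dots> = card (orb ` X) * k" by simp
  finally show ?thesis by (simp add: orb_def)
qed



lemma card_img_eq:
  assumes "\<And>x y. f x = f y \<longleftrightarrow> g x = g y"
  shows "card (f ` S) = card (g ` S)"
proof -
  have e1: "g x = g (inv_into S f (f x))" if "x \<in> S" for x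
    using that by (simp add: assms[symmetric] f_inv_into_f)
  have e: "g ` S = (\<lambda>u. g (inv_into S f u)) ` (f ` S)"
  proof (rule set_eqI, rule iffI)
    fix y assume "y \<in> g ` S"
    then obtain x where "x \<in> S" "y = g x" by blast
    then show "y \<in> (\<lambda>u. g (inv_into S f u)) ` (f ` S)" using e1 by blast
  next
    fix y assume "y \<in> (\<lambda>u. g (inv_into S f u)) ` (f ` S)"
    then obtain x where "x \<in> S" "y = g (inv_into S f (f x))" by blast
    then show "y \<in> g ` S" using e1 by auto
  qed
  have i: "inj_on (\<lambda>u. g (inv_into S f u)) (f ` S)"
  proof (rule inj_onI)
    fix a b assume "a \<in> f ` S" "b \<in> f ` S" "g (inv_into S f a) = g (inv_into S f b)"
    then have "f (inv_into S f a) = f (inv_into S f b)" by (simp add: assms)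
    then show "a = b" using \<open>a \<in> f ` S\<close> \<open>b \<in> f ` S\<close> by (simp add: f_inv_into_f)
  qed
  show ?thesis using card_image[OF i] e by simp
qed

definition sig' :: "nat \<Rightarrow> (nat \<Rightarrow> int^2) \<Rightarrow> nat \<Rightarrow> int^2" where
  "sig' k v = (\<lambda>j. if j < k then v (Suc j mod k) else 0)"

context
  fixes g :: "int^2^2" and n :: nat
begin

lemma sig_Suc: "cyc_perm (Suc n) v j = (if j < Suc n then v ((j + n) mod Suc n) else 0)"
  by (simp add: cyc_perm_def cyc_tensor_def)

lemma modlem0: "j < Suc n \<Longrightarrow> Suc (j + n) mod Suc n = j"
  by (metis add_Suc_right mod_add_self2 mod_less)
lemma modlem1: "j < Suc n \<Longrightarrow> Suc ((j + n) mod Suc n) mod Suc n = j"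
  by (simp add: mod_Suc_eq modlem0)
lemma modlem2: "j < Suc n \<Longrightarrow> (Suc j mod Suc n + n) mod Suc n = j"
  by (simp add: mod_add_left_eq modlem0)

lemma sig_sig': "v \<in> Zvec (Suc n) \<Longrightarrow> cyc_perm (Suc n) (sig' (Suc n) v) = v"
  by (auto simp: fun_eq_iff sig_Suc sig'_def modlem1 Zvec_def)
lemma sig'_sig: "v \<in> Zvec (Suc n) \<Longrightarrow> sig' (Suc n) (cyc_perm (Suc n) v) = v"
  by (auto simp: fun_eq_iff sig_Suc sig'_def modlem2 Zvec_def)
lemma sig_Zvec: "cyc_perm (Suc n) v \<in> Zvec (Suc n)"
  by (simp add: Zvec_def sig_Suc)
lemma sig'_Zvec: "sig' (Suc n) v \<in> Zvec (Suc n)"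
  by (simp add: Zvec_def sig'_def)
lemma sig_diff: "cyc_perm (Suc n) (a - b) = cyc_perm (Suc n) a - cyc_perm (Suc n) b"
  by (simp add: fun_eq_iff sig_Suc)
lemma sig'_diff: "sig' (Suc n) (a - b) = sig' (Suc n) a - sig' (Suc n) b"
  by (simp add: fun_eq_iff sig'_def)

lemma sig_T: "cyc_perm (Suc n) (cyc_tensor (Suc n) g w) = cyc_tensor (Suc n) g (cyc_perm (Suc n) w)"
  by (simp add: fun_eq_iff sig_Suc cyc_tensor_Suc)
lemma sig'_T: "sig' (Suc n) (cyc_tensor (Suc n) g w) = cyc_tensor (Suc n) g (sig' (Suc n) w)"
  by (simp add: fun_eq_iff sig'_def cyc_tensor_Suc modlem1 modlem2)

lemma sig_Img: "a \<in> Img (Suc n) g \<Longrightarrow> cyc_perm (Suc n) a \<in> Img (Suc n) g"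
proof -
  assume "a \<in> Img (Suc n) g"
  then obtain w where w: "w \<in> Zvec (Suc n)" "a = Mmap (Suc n) g w" by (auto simp: Img_def)
  have "cyc_perm (Suc n) a = Mmap (Suc n) g (cyc_perm (Suc n) w)"
    by (simp add: w Mmap_def sig_diff sig_T)
  then show ?thesis unfolding Img_def using sig_Zvec by blast
qed
lemma sig'_Img: "a \<in> Img (Suc n) g \<Longrightarrow> sig' (Suc n) a \<in> Img (Suc n) g"
proof -
  assume "a \<in> Img (Suc n) g"
  then obtain w where w: "w \<in> Zvec (Suc n)" "a = Mmap (Suc n) g w" by (auto simp: Img_def)
  have "sig' (Suc n) a = Mmap (Suc n) g (sig' (Suc n) w)"
    by (simp add: w Mmap_def sig'_diff sig'_T)
  then show ?thesis unfolding Img_def using sig'_Zvec by blast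
qed

definition "cls u = coker_rel (Suc n) g `` {u}"
definition "Phi x = cls (e0 x)"
definition "FF C = cyc_perm (Suc n) ` C"
definition "cc = Suc n - 1 mod Suc n"

lemma cls_phi: "u \<in> Zvec (Suc n) \<Longrightarrow> cls u = Phi (phi (Suc n) g u)"
proof -
  assume u: "u \<in> Zvec (Suc n)"
  have "mpow g (Suc n) *v phi (Suc n) g u - phi (Suc n) g u \<in> lat (BB g (Suc n))" by (rule fix_k)
  then have "phi (Suc n) g u - mpow g (Suc n) *v phi (Suc n) g u \<in> lat (BB g (Suc n))"
    using lat_neg by fastforce
  then have "(u, e0 (phi (Suc n) g u)) \<in> coker_rel (Suc n) g"
    using u Zvec_e0 by (simp add: rel_char phi_e0)
  then show ?thesis unfolding cls_def Phi_def by (rule equiv_class_eq[OF rel_equiv])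
qed

lemma Phi_eq: "Phi x = Phi y \<longleftrightarrow> x - y \<in> lat (BB g (Suc n))"
proof -
  have "Phi x = Phi y \<longleftrightarrow> (e0 x, e0 y) \<in> coker_rel (Suc n) g"
    unfolding Phi_def cls_def by (rule eq_equiv_class_iff[OF rel_equiv Zvec_e0 Zvec_e0]) simp_all
  also have "\<dots> \<longleftrightarrow> mpow g (Suc n) *v (x - y) \<in> lat (BB g (Suc n))"
    using Zvec_e0 by (simp add: rel_char phi_e0 mv_diff)
  also have "\<dots> \<longleftrightarrow> x - y \<in> lat (BB g (Suc n))"
  proof -
    have f: "mpow g (Suc n) *v (x - y) - (x - y) \<in> lat (BB g (Suc n))" by (rule fix_k)
    show ?thesis
    proof
      assume "mpow g (Suc n) *v (x - y) \<in> lat (BB g (Suc n))"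
      from lat_diff[OF this f] show "x - y \<in> lat (BB g (Suc n))" by simp
    next
      assume "x - y \<in> lat (BB g (Suc n))"
      from lat_add[OF f this] show "mpow g (Suc n) *v (x - y) \<in> lat (BB g (Suc n))" by simp
    qed
  qed
  finally show ?thesis .
qed

lemma Phi_cosB: "Phi x = Phi y \<longleftrightarrow> cosB (BB g (Suc n)) x = cosB (BB g (Suc n)) y"
  by (simp add: Phi_eq cosB_eq)

lemma quot_range: "Zvec (Suc n) // coker_rel (Suc n) g = range Phi"
proof (rule set_eqI, rule iffI)
  fix C assume "C \<in> Zvec (Suc n) // coker_rel (Suc n) g"
  then obtain u where "u \<in> Zvec (Suc n)" "C = cls u" by (auto simp: quotient_def cls_def)
  then show "C \<in> range Phi" using cls_phi by blast
next
  fix C assume "C \<in> range Phi"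
  then obtain x where "C = Phi x" by blast
  then show "C \<in> Zvec (Suc n) // coker_rel (Suc n) g"
    unfolding Phi_def cls_def by (simp add: quotientI Zvec_e0)
qed

lemma FF_cls:
  assumes u: "u \<in> Zvec (Suc n)"
  shows "FF (cls u) = cls (cyc_perm (Suc n) u)"
proof (rule set_eqI, rule iffI)
  fix b assume "b \<in> FF (cls u)"
  then obtain a where a: "(u, a) \<in> coker_rel (Suc n) g" "b = cyc_perm (Suc n) a"
    by (auto simp: FF_def cls_def)
  then have "a \<in> Zvec (Suc n)" "u - a \<in> Img (Suc n) g" by (auto simp: coker_rel_def)
  then have "cyc_perm (Suc n) u - b \<in> Img (Suc n) g" using a(2) sig_Img sig_diff by metis
  then show "b \<in> cls (cyc_perm (Suc n) u)"
    using a(2) sig_Zvec by (simp add: cls_def coker_rel_def)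
next
  fix b assume "b \<in> cls (cyc_perm (Suc n) u)"
  then have b: "b \<in> Zvec (Suc n)" "cyc_perm (Suc n) u - b \<in> Img (Suc n) g"
    by (auto simp: cls_def coker_rel_def)
  define a where "a = sig' (Suc n) b"
  have "u - a = sig' (Suc n) (cyc_perm (Suc n) u - b)"
    by (simp add: a_def sig'_diff sig'_sig[OF u])
  then have "u - a \<in> Img (Suc n) g" using sig'_Img b(2) by simp
  then have "a \<in> cls u" using u sig'_Zvec by (simp add: cls_def coker_rel_def a_def)
  moreover have "b = cyc_perm (Suc n) a" by (simp add: a_def sig_sig'[OF b(1)])
  ultimately show "b \<in> FF (cls u)" by (simp add: FF_def)
qed

lemma modlem3: "j < Suc n \<Longrightarrow> ((j + n) mod Suc n = 0) \<longleftrightarrow> j = 1 mod Suc n"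
proof (cases n)
  case 0 then show "j < Suc n \<Longrightarrow> ?thesis" by simp
next
  case (Suc m)
  assume j: "j < Suc n"
  show ?thesis
  proof (cases j)
    case 0 then show ?thesis using Suc by simp
  next
    case (Suc i)
    then have "(j + n) mod Suc n = i" using j by (simp add: mod_if)
    then show ?thesis using Suc \<open>n = Suc m\<close> by simp
  qed
qed

lemma phi_sig_e0: "phi (Suc n) g (cyc_perm (Suc n) (e0 x)) = mpow g cc *v x"
proof -
  have "phi (Suc n) g (cyc_perm (Suc n) (e0 x))
      = (\<Sum>j<Suc n. if j = 1 mod Suc n then mpow g (Suc n - j) *v x else 0)"
    unfolding phi_def
  proof (rule sum.cong[OF refl])
    fix j assume "j \<in> {..<Suc n}"
    then have j: "j < Suc n" by simp
    show "mpow g (Suc n - j) *v cyc_perm (Suc n) (e0 x) j = (if j = 1 mod Suc n then mpow g (Suc n - j) *v x else 0)"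
      using modlem3[OF j] j by (simp add: sig_Suc e0_def)
  qed
  also have "\<dots> = mpow g cc *v x" by (simp add: sum.delta cc_def)
  finally show ?thesis .
qed

lemma FF_Phi: "FF (Phi x) = Phi (mpow g cc *v x)"
proof -
  have "FF (Phi x) = cls (cyc_perm (Suc n) (e0 x))" unfolding Phi_def by (rule FF_cls[OF Zvec_e0]) simp
  also have "\<dots> = Phi (phi (Suc n) g (cyc_perm (Suc n) (e0 x)))" by (rule cls_phi[OF sig_Zvec])
  also have "\<dots> = Phi (mpow g cc *v x)" by (simp only: phi_sig_e0)
  finally show ?thesis .
qed

lemma FF_pow: "(FF ^^ m) (Phi x) = Phi (mpow g (cc * m) *v x)"
proof (induction m)
  case (Suc m)
  have "(FF ^^ Suc m) (Phi x) = Phi (mpow g cc *v (mpow g (cc * m) *v x))" by (simp add: Suc FF_Phi)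
  also have "\<dots> = Phi (mpow g (cc * Suc m) *v x)" by (simp add: mpow_v_add)
  finally show ?case .
qed simp

lemma orbit_FF: "(cyc_perm (Suc n) ^^ m) ` C = (FF ^^ m) C"
proof (induction m)
  case (Suc m)
  have "(cyc_perm (Suc n) ^^ Suc m) ` C = cyc_perm (Suc n) ` ((cyc_perm (Suc n) ^^ m) ` C)"
    by (simp add: image_image)
  also have "\<dots> = cyc_perm (Suc n) ` ((FF ^^ m) C)" by (simp only: Suc)
  also have "\<dots> = FF ((FF ^^ m) C)" by (simp only: FF_def)
  finally show ?case by simp
qed simp

lemma cc_coprime: "coprime (Suc n) cc"
proof -
  have e: "cc = Suc n - 1 mod Suc n" by (rule cc_def)
  show ?thesis
  proof (cases n)
    case 0 then show ?thesis using e by simp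
  next
    case (Suc m)
    then have "cc = n" using e by simp
    then show ?thesis by simp
  qed
qed

lemma main_nat:
  assumes dB: "det (BB g (Suc n)) \<noteq> 0"
  shows "c_k (Suc n) g * Suc n = (\<Sum>d | d dvd Suc n. totient (Suc n div d) * nat \<bar>det (mat 1 - mpow g d)\<bar>)"
proof -
  define X where "X = coker_tors (Suc n) g"
  have X: "X = range Phi" using tors_all[OF dB] quot_range by (simp add: X_def)
  have ck: "c_k (Suc n) g = card ((\<lambda>C. {(FF ^^ m) C | m. True}) ` X)"
    unfolding c_k_def X_def cyc_orbit_def orbit_FF ..
  have finX: "finite X"
    using X card_range_eq(2)[of Phi "cosB (BB g (Suc n))", OF Phi_cosB] card_cosB(2)[OF dB] by simp
  have FX: "FF C \<in> X" if "C \<in> X" for C using that X FF_Phi by auto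
  have per: "(FF ^^ Suc n) C = C" if C: "C \<in> X" for C
  proof -
    obtain x where x: "C = Phi x" using C X by auto
    have "x \<in> fixset g (Suc n) (Suc n)" unfolding fixset_def by (rule CollectI, rule fix_k)
    then have "x \<in> fixset g (Suc n) (Suc n * cc)" by (rule fix_mult)
    then have h0: "x \<in> fixset g (Suc n) (cc * Suc n)" by (simp only: mult.commute)
    have "mpow g (cc * Suc n) *v x - x \<in> lat (BB g (Suc n))" using h0 by (simp only: fixset_def mem_Collect_eq)
    then show ?thesis by (simp only: x FF_pow Phi_eq)
  qed
  have B: "card ((\<lambda>C. {(FF ^^ m) C | m. True}) ` X) * Suc n = (\<Sum>m<Suc n. card {C\<in>X. (FF ^^ m) C = C})"
    by (rule burnside_cyc[OF finX FX per]) simp_all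
  have fixcount: "card {C\<in>X. (FF ^^ m) C = C} = nat \<bar>det (mat 1 - mpow g (gcd m (Suc n)))\<bar>" for m
  proof -
    have "{C\<in>X. (FF ^^ m) C = C} = Phi ` fixset g (Suc n) (cc * m)"
    proof (rule set_eqI, rule iffI)
      fix C assume C: "C \<in> {C\<in>X. (FF ^^ m) C = C}"
      then obtain x where x: "C = Phi x" using X by auto
      have "(FF ^^ m) (Phi x) = Phi x" using C x by simp
      then have "x \<in> fixset g (Suc n) (cc * m)" by (simp only: FF_pow Phi_eq fixset_def mem_Collect_eq)
      then show "C \<in> Phi ` fixset g (Suc n) (cc * m)" using x by blast
    next
      fix C assume "C \<in> Phi ` fixset g (Suc n) (cc * m)"
      then obtain x where x: "C = Phi x" "x \<in> fixset g (Suc n) (cc * m)" by blast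
      then have "(FF ^^ m) (Phi x) = Phi x" by (simp only: FF_pow Phi_eq fixset_def mem_Collect_eq)
      then show "C \<in> {C\<in>X. (FF ^^ m) C = C}" using x X by simp
    qed
    also have "fixset g (Suc n) (cc * m) = fixset g (Suc n) (gcd m (Suc n))"
    proof -
      have "gcd (cc * m) (Suc n) = gcd m (Suc n)"
        using gcd_mult_right_right_cancel[OF cc_coprime, of m] by (simp add: gcd.commute mult.commute)
      then show ?thesis using fixset_gcd[of "Suc n" g "cc * m"] by simp
    qed
    finally have "card {C\<in>X. (FF ^^ m) C = C} = card (cosB (BB g (Suc n)) ` fixset g (Suc n) (gcd m (Suc n)))"
      using card_img_eq[of Phi "cosB (BB g (Suc n))", OF Phi_cosB] by simp
    also have "\<dots> = nat \<bar>det (mat 1 - mpow g (gcd m (Suc n)))\<bar>"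
      by (rule card_fixset(1)[OF _ dB]) simp
    finally show ?thesis .
  qed
  have "c_k (Suc n) g * Suc n = (\<Sum>m<Suc n. nat \<bar>det (mat 1 - mpow g (gcd m (Suc n)))\<bar>)"
    using ck B fixcount by simp
  also have "\<dots> = (\<Sum>d | d dvd Suc n. of_nat (totient (Suc n div d)) * nat \<bar>det (mat 1 - mpow g d)\<bar>)"
    by (rule gcd_sum) simp
  finally show ?thesis by simp
qed

end



theorem lemma3p9:
  fixes \<gamma> :: "int^2^2" and k :: nat
  assumes "det \<gamma> = 1" and "k \<ge> 1"
    and "det (mat 1 - mpow \<gamma> k) \<noteq> 0"
  shows "real (c_k k \<gamma>) =
    (1 / real k) * (\<Sum>d \<in> {d. d dvd k}.
       real (totient (k div d)) * \<bar>real_of_int (trace (mpow \<gamma> d) - 2)\<bar>)"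
proof -
  obtain n where k: "k = Suc n" using assms(2) by (cases k) auto
  have dB: "det (BB \<gamma> (Suc n)) \<noteq> 0" using assms(3) by (simp add: BB_def k)
  have M: "c_k (Suc n) \<gamma> * Suc n = (\<Sum>d | d dvd Suc n. totient (Suc n div d) * nat \<bar>det (mat 1 - mpow \<gamma> d)\<bar>)"
    by (rule main_nat[OF dB])
  have e: "real (nat \<bar>det (mat 1 - mpow \<gamma> d)\<bar>) = \<bar>real_of_int (trace (mpow \<gamma> d) - 2)\<bar>" for d
  proof -
    have "real (nat \<bar>det (mat 1 - mpow \<gamma> d)\<bar>) = real_of_int \<bar>det (mat 1 - mpow \<gamma> d)\<bar>"
      by (simp add: of_nat_nat)
    also have "\<dots> = real_of_int \<bar>trace (mpow \<gamma> d) - 2\<bar>"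
      by (simp add: det_I_mpow[OF assms(1)] abs_minus_commute)
    also have "\<dots> = \<bar>real_of_int (trace (mpow \<gamma> d) - 2)\<bar>" by (simp only: of_int_abs)
    finally show ?thesis .
  qed
  have "real (c_k k \<gamma>) * real k = real (c_k (Suc n) \<gamma> * Suc n)" by (simp only: k of_nat_mult)
  also have "\<dots> = (\<Sum>d | d dvd Suc n. real (totient (Suc n div d)) * real (nat \<bar>det (mat 1 - mpow \<gamma> d)\<bar>))"
    by (simp only: M of_nat_sum of_nat_mult)
  also have "\<dots> = (\<Sum>d \<in> {d. d dvd k}. real (totient (k div d)) * \<bar>real_of_int (trace (mpow \<gamma> d) - 2)\<bar>)"
    by (simp only: e k)
  finally show ?thesis using k by (simp add: field_simps)
qed


end
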